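(* The space $\mathcal{M}(H^1(\mathbb{R}))$ of bounded Fourier multipliers on $H^1(\mathbb{R})$ is weak$^*$-closed in $B(H^1(\mathbb{R}))$, where $B(H^1(\mathbb{R}))$ carries the weak$^*$-topology coming from the isometric identification $B(H^1(\mathbb{R}))\simeq\big((C_0(\mathbb{R})/Z_0)\widehat{\otimes}H^1(\mathbb{R})\big)^*$ given by $\langle T,\dot f\otimes h\rangle=\int_{\mathbb{R}}(Th)(t)f(-t)\,dt$.
   Context: $H^1(\mathbb{R})=\{h\in L^1(\mathbb{R}):\widehat h(u)=0\ \forall u\le0\}$, $\widehat h(u)=\int h(t)e^{-itu}dt$. $H^\infty(\mathbb{R})$ is the weak$^*$-closure of $H^1(\mathbb{R})\cap L^\infty(\mathbb{R})$ in $L^\infty(\mathbb{R})$ (equivalently the bounded functions whose Poisson integral on the upper half-plane is analytic). $Z_0=C_0(\mathbb{R})\cap H^\infty(\mathbb{R})$, and $\dot f$ is the class of $f\in C_0(\mathbb{R})$ in $C_0(\mathbb{R})/Z_0$. One has $(C_0(\mathbb{R})/Z_0)^*\simeq H^1(\mathbb{R})$ via $\langle h,\dot f\rangle=\int h(t)f(-t)dt$, which yields the stated identification of $B(H^1(\mathbb{R}))$ as the dual of the projective tensor product $(C_0(\mathbb{R})/Z_0)\widehat{\otimes}H^1(\mathbb{R})$. $\mathcal{M}(H^1(\mathbb{R}))$ is the set of $T\in B(H^1(\mathbb{R}))$ of the form $Th=\mathcal{F}^{-1}(m\widehat h)$ for some $m\in L^\infty(0,\infty)$. *)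

theory Defs
  imports "HOL-Analysis.Analysis"
begin

definition fourier :: "(real \<Rightarrow> complex) \<Rightarrow> real \<Rightarrow> complex" where
  "fourier h u = (\<integral>t. h t * exp (- \<i> * complex_of_real (t * u)) \<partial>lborel)"

definition L1_norm :: "(real \<Rightarrow> complex) \<Rightarrow> real" where
  "L1_norm h = (\<integral>t. cmod (h t) \<partial>lborel)"

definition H1 :: "(real \<Rightarrow> complex) set" where
  "H1 = {h. integrable lborel h \<and> (\<forall>u\<le>0. fourier h u = 0)}"

definition C0 :: "(real \<Rightarrow> complex) set" where
  "C0 = {f. continuous_on UNIV f \<and> (f \<longlongrightarrow> 0) at_infinity}"

definition sup_norm :: "(real \<Rightarrow> complex) \<Rightarrow> real" where
  "sup_norm f = (SUP t. cmod (f t))"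

text \<open>Bounded linear operators on H^1(R), represented as maps on representatives;
  linearity is required up to a.e. equality.\<close>
definition BH1 :: "((real \<Rightarrow> complex) \<Rightarrow> (real \<Rightarrow> complex)) set" where
  "BH1 = {T. (\<forall>h\<in>H1. T h \<in> H1)
            \<and> (\<forall>h\<in>H1. \<forall>g\<in>H1. \<forall>c::complex.
                  AE t in lborel. T (\<lambda>s. c * h s + g s) t = c * T h t + T g t)
            \<and> (\<exists>C. \<forall>h\<in>H1. L1_norm (T h) \<le> C * L1_norm h)}"

definition MH1 :: "((real \<Rightarrow> complex) \<Rightarrow> (real \<Rightarrow> complex)) set" where
  "MH1 = {T\<in>BH1. \<exists>m::real \<Rightarrow> complex. m \<in> borel_measurable lborel
            \<and> (\<exists>C. AE u in lborel. u > 0 \<longrightarrow> cmod (m u) \<le> C)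
            \<and> (\<forall>h\<in>H1. AE u in lborel. u > 0 \<longrightarrow> fourier (T h) u = m u * fourier h u)}"

text \<open>Elements of the projective tensor product (C_0/Z_0) \<otimes> H^1 are represented by
  sequences (f_n, h_n) with f_n in C_0, h_n in H^1 and sum ||f_n|| ||h_n|| finite;
  their pairing with T is sum_n integral (T h_n)(t) f_n(-t) dt.\<close>
definition tensor_reps :: "((nat \<Rightarrow> real \<Rightarrow> complex) \<times> (nat \<Rightarrow> real \<Rightarrow> complex)) set" where
  "tensor_reps = {(f, h). (\<forall>n. f n \<in> C0 \<and> h n \<in> H1)
                    \<and> summable (\<lambda>n. sup_norm (f n) * L1_norm (h n))}"

definition pairing ::
  "((real \<Rightarrow> complex) \<Rightarrow> (real \<Rightarrow> complex)) \<Rightarrow> (nat \<Rightarrow> real \<Rightarrow> complex) \<Rightarrow> (nat \<Rightarrow> real \<Rightarrow> complex) \<Rightarrow> complex" where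
  "pairing T f h = (\<Sum>n. \<integral>t. T (h n) t * f n (- t) \<partial>lborel)"

definition weak_star_BH1 :: "((real \<Rightarrow> complex) \<Rightarrow> (real \<Rightarrow> complex)) topology" where
  "weak_star_BH1 = topology_generated_by
     (insert BH1 {{T \<in> BH1. pairing T f h \<in> U} | f h U. (f, h) \<in> tensor_reps \<and> open U})"

end

theory Submission
  imports Defs "HOL-Probability.Probability" "HOL-Real_Asymp.Real_Asymp"
begin


lemma fubini_swap:
  fixes F :: "real \<Rightarrow> real \<Rightarrow> complex"
  assumes meas[measurable]: "(\<lambda>(x,y). F x y) \<in> borel_measurable (lborel \<Otimes>\<^sub>M lborel)"
   and bnd: "\<And>x y. norm (F x y) \<le> A x * B y" and A0: "\<And>x. 0 \<le> A x" and B0: "\<And>y. 0 \<le> B y"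
   and iA: "integrable lborel A" and iB: "integrable lborel B"
  shows "(\<integral>x. (\<integral>y. F x y \<partial>lborel) \<partial>lborel) = (\<integral>y. (\<integral>x. F x y \<partial>lborel) \<partial>lborel)"
proof -
  have Am[measurable]: "A \<in> borel_measurable lborel" and Bm[measurable]: "B \<in> borel_measurable lborel"
    using iA iB by auto
  have m2: "(\<lambda>x. \<integral>y. norm (F x y) \<partial>lborel) \<in> borel_measurable lborel"
    by (rule lborel.borel_measurable_lebesgue_integral) measurable
  have ix: "integrable lborel (\<lambda>y. F x y)" for x
  proof (rule Bochner_Integration.integrable_bound)
    show "integrable lborel (\<lambda>y. A x * B y)" using iB by simp
    show "(\<lambda>y. F x y) \<in> borel_measurable lborel" by measurable
    show "AE y in lborel. norm (F x y) \<le> norm (A x * B y)"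
      using bnd A0 B0 by (intro AE_I2) (metis abs_of_nonneg mult_nonneg_nonneg real_norm_def)
  qed
  have i1: "integrable lborel (\<lambda>x. \<integral>y. norm (F x y) \<partial>lborel)"
  proof (rule Bochner_Integration.integrable_bound)
    show "integrable lborel (\<lambda>x. A x * (\<integral>y. B y \<partial>lborel))" using iA by simp
    show "(\<lambda>x. \<integral>y. norm (F x y) \<partial>lborel) \<in> borel_measurable lborel" by (rule m2)
    show "AE x in lborel. norm (\<integral>y. norm (F x y) \<partial>lborel) \<le> norm (A x * (\<integral>y. B y \<partial>lborel))"
    proof (intro AE_I2)
      fix x
      have i1: "integrable lborel (\<lambda>y. A x * B y)" using iB by simp
      have "(\<integral>y. norm (F x y) \<partial>lborel) \<le> (\<integral>y. A x * B y \<partial>lborel)"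
        by (rule integral_mono[OF _ i1]) (use bnd ix in auto)
      moreover have "0 \<le> (\<integral>y. norm (F x y) \<partial>lborel)" by simp
      moreover have "0 \<le> (\<integral>y. B y \<partial>lborel)" using B0 by simp
      ultimately show "norm (\<integral>y. norm (F x y) \<partial>lborel) \<le> norm (A x * (\<integral>y. B y \<partial>lborel))"
        using A0[of x] by simp
    qed
  qed
  have "integrable (lborel \<Otimes>\<^sub>M lborel) (\<lambda>(x,y). F x y)"
    by (rule lborel_pair.Fubini_integrable) (use i1 ix in auto)
  then show ?thesis using lborel_pair.Fubini_integral[of F] by simp
qed


lemma gauss: "(\<integral>v. complex_of_real (std_normal_density v) * exp (\<i> * complex_of_real (z * v)) \<partial>lborel) = complex_of_real (exp (- (z^2) / 2))"
proof -
  have "char std_normal_distribution z = complex_of_real (exp (- (z^2) / 2))"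
    by (simp add: char_std_normal_distribution)
  moreover have "char std_normal_distribution z = (\<integral>v. std_normal_density v *\<^sub>R exp (\<i> * complex_of_real (z * v)) \<partial>lborel)"
    unfolding char_def by (subst integral_density) auto
  ultimately show ?thesis by (simp add: scaleR_conv_of_real)
qed

lemma norm_exp_ii [simp]: "norm (exp (- \<i> * complex_of_real x)) = 1"
  by (simp add: norm_exp_eq_Re)

lemma fourier_bound:
  assumes "integrable lborel h" shows "norm (fourier h u) \<le> L1_norm h"
  unfolding fourier_def L1_norm_def
  using Bochner_Integration.integral_norm_bound[of lborel "\<lambda>t. h t * exp (- \<i> * complex_of_real (t * u))"]
  by (simp add: norm_mult)

lemma fourier_cont:
  assumes ih: "integrable lborel h" shows "continuous_on UNIV (fourier h)"
proof -
  have hm[measurable]: "h \<in> borel_measurable lborel" using ih by auto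
  have "continuous (at u) (fourier h)" for u
  proof (rule continuous_at_sequentiallyI)
    fix X assume X: "X \<longlonglongrightarrow> u"
    show "(\<lambda>n. fourier h (X n)) \<longlonglongrightarrow> fourier h u"
      unfolding fourier_def
    proof (rule integral_dominated_convergence[where w="\<lambda>t. norm (h t)"])
      show "integrable lborel (\<lambda>t. norm (h t))" using ih by simp
      show "AE t in lborel. (\<lambda>n. h t * exp (- \<i> * complex_of_real (t * X n))) \<longlonglongrightarrow> h t * exp (- \<i> * complex_of_real (t * u))"
        by (intro AE_I2 tendsto_mult tendsto_const tendsto_exp tendsto_of_real X)
      show "\<And>n. AE t in lborel. norm (h t * exp (- \<i> * complex_of_real (t * X n))) \<le> norm (h t)"
        by (simp add: norm_mult)
      show "(\<lambda>t. h t * exp (- \<i> * complex_of_real (t * u))) \<in> borel_measurable lborel" by measurable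
      show "\<And>n. (\<lambda>t. h t * exp (- \<i> * complex_of_real (t * X n))) \<in> borel_measurable lborel" by measurable
    qed
  qed
  then show ?thesis by (simp add: continuous_on_eq_continuous_at)
qed

lemma fourier_meas:
  assumes "integrable lborel h" shows "fourier h \<in> borel_measurable borel"
  using fourier_cont[OF assms] by (simp add: borel_measurable_continuous_onI)



definition Ker :: "real \<Rightarrow> real \<Rightarrow> complex" where
  "Ker d z = complex_of_real (exp (- ((d * z)^2)/2))"
definition EE :: "real \<Rightarrow> real \<Rightarrow> real \<Rightarrow> complex" where
  "EE u d z = exp (- \<i> * complex_of_real (z*u)) * Ker d z"
definition GG :: "real \<Rightarrow> real \<Rightarrow> (real \<Rightarrow> complex) \<Rightarrow> real \<Rightarrow> complex" where
  "GG u d b t = (\<integral>y. b y * EE u d (t+y) \<partial>lborel)"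

abbreviation "cphi v \<equiv> complex_of_real (std_normal_density v)"
abbreviation "ecx s w \<equiv> exp (- \<i> * complex_of_real (s * w))"

lemma ecx_mult: "ecx s w * ecx r w = ecx (s + r) w"
  by (simp add: exp_add[symmetric] algebra_simps)

lemma E_repr: "EE u d z = (\<integral>v. cphi v * ecx z (u - d * v) \<partial>lborel)"
proof -
  have "Ker d z = (\<integral>v. cphi v * exp (\<i> * complex_of_real ((d * z) * v)) \<partial>lborel)"
    unfolding Ker_def gauss by (simp add: power_mult_distrib)
  then have "EE u d z = (\<integral>v. ecx z u * (cphi v * exp (\<i> * complex_of_real ((d * z) * v))) \<partial>lborel)"
    unfolding EE_def by simp
  also have "\<dots> = (\<integral>v. cphi v * ecx z (u - d * v) \<partial>lborel)"
  proof (rule Bochner_Integration.integral_cong[OF refl])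
    fix v
    have "ecx z u * exp (\<i> * complex_of_real ((d * z) * v)) = ecx z (u - d * v)"
      by (simp add: exp_add[symmetric] algebra_simps)
    then show "ecx z u * (cphi v * exp (\<i> * complex_of_real ((d * z) * v))) = cphi v * ecx z (u - d * v)"
      by (metis mult.left_commute)
  qed
  finally show ?thesis .
qed


lemma Q:
  assumes ia: "integrable lborel a" and ib: "integrable lborel b"
  shows "(\<integral>t. a t * GG u d b t \<partial>lborel) = (\<integral>v. cphi v * (fourier a (u - d * v) * fourier b (u - d * v)) \<partial>lborel)"
proof -
  have am[measurable]: "a \<in> borel_measurable lborel" using ia by auto
  have bm[measurable]: "b \<in> borel_measurable lborel" using ib by auto
  have fbm[measurable]: "fourier b \<in> borel_measurable borel" by (rule fourier_meas[OF ib])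
  have s1: "a t * GG u d b t = (\<integral>y. (\<integral>v. a t * b y * cphi v * (ecx t (u - d * v) * ecx y (u - d * v)) \<partial>lborel) \<partial>lborel)" for t
  proof -
    have "a t * GG u d b t = a t * (\<integral>y. b y * (\<integral>v. cphi v * ecx (t+y) (u - d * v) \<partial>lborel) \<partial>lborel)"
      by (simp add: GG_def E_repr)
    also have "\<dots> = (\<integral>y. a t * (b y * (\<integral>v. cphi v * ecx (t+y) (u - d * v) \<partial>lborel)) \<partial>lborel)"
      by (rule integral_mult_right_zero[symmetric])
    also have "\<dots> = (\<integral>y. (\<integral>v. a t * b y * cphi v * (ecx t (u - d * v) * ecx y (u - d * v)) \<partial>lborel) \<partial>lborel)"
    proof (rule Bochner_Integration.integral_cong[OF refl])
      fix y
      have "a t * (b y * (\<integral>v. cphi v * ecx (t+y) (u - d * v) \<partial>lborel)) = (\<integral>v. (a t * b y) * (cphi v * ecx (t+y) (u - d * v)) \<partial>lborel)"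
        by (simp only: integral_mult_right_zero mult.assoc)
      also have "\<dots> = (\<integral>v. a t * b y * cphi v * (ecx t (u - d * v) * ecx y (u - d * v)) \<partial>lborel)"
        by (rule Bochner_Integration.integral_cong[OF refl]) (subst ecx_mult[symmetric], simp only: mult.assoc)
      finally show "a t * (b y * (\<integral>v. cphi v * ecx (t+y) (u - d * v) \<partial>lborel)) = (\<integral>v. a t * b y * cphi v * (ecx t (u - d * v) * ecx y (u - d * v)) \<partial>lborel)" .
    qed
    finally show ?thesis .
  qed
  have s2: "(\<integral>y. (\<integral>v. a t * b y * cphi v * (ecx t (u - d * v) * ecx y (u - d * v)) \<partial>lborel) \<partial>lborel)
      = (\<integral>v. a t * cphi v * ecx t (u - d * v) * fourier b (u - d * v) \<partial>lborel)" for t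
  proof -
    have "(\<integral>y. (\<integral>v. a t * b y * cphi v * (ecx t (u - d * v) * ecx y (u - d * v)) \<partial>lborel) \<partial>lborel)
       = (\<integral>v. (\<integral>y. a t * b y * cphi v * (ecx t (u - d * v) * ecx y (u - d * v)) \<partial>lborel) \<partial>lborel)"
    proof (rule fubini_swap[where A="\<lambda>y. norm (a t) * norm (b y)" and B="\<lambda>v. std_normal_density v"])
      show "(\<lambda>(y, v). a t * b y * cphi v * (ecx t (u - d * v) * ecx y (u - d * v))) \<in> borel_measurable (lborel \<Otimes>\<^sub>M lborel)"
        by measurable
      show "cmod (a t * b y * cphi v * (ecx t (u - d * v) * ecx y (u - d * v))) \<le> cmod (a t) * cmod (b y) * std_normal_density v" for y v
        by (simp add: norm_mult)
      show "integrable lborel (\<lambda>y. cmod (a t) * cmod (b y))" using ib by simp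
    qed auto
    also have "\<dots> = (\<integral>v. a t * cphi v * ecx t (u - d * v) * fourier b (u - d * v) \<partial>lborel)"
    proof (rule Bochner_Integration.integral_cong[OF refl])
      fix v
      have "(\<integral>y. a t * b y * cphi v * (ecx t (u - d * v) * ecx y (u - d * v)) \<partial>lborel)
          = (\<integral>y. (a t * cphi v * ecx t (u - d * v)) * (b y * ecx y (u - d * v)) \<partial>lborel)"
        by (rule Bochner_Integration.integral_cong[OF refl]) (simp add: algebra_simps)
      also have "\<dots> = a t * cphi v * ecx t (u - d * v) * fourier b (u - d * v)"
        by (simp only: integral_mult_right_zero fourier_def)
      finally show "(\<integral>y. a t * b y * cphi v * (ecx t (u - d * v) * ecx y (u - d * v)) \<partial>lborel) = a t * cphi v * ecx t (u - d * v) * fourier b (u - d * v)" .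
    qed
    finally show ?thesis .
  qed
  have "(\<integral>t. a t * GG u d b t \<partial>lborel) = (\<integral>t. (\<integral>v. a t * cphi v * ecx t (u - d * v) * fourier b (u - d * v) \<partial>lborel) \<partial>lborel)"
    using s1 s2 by simp
  also have "\<dots> = (\<integral>v. (\<integral>t. a t * cphi v * ecx t (u - d * v) * fourier b (u - d * v) \<partial>lborel) \<partial>lborel)"
  proof (rule fubini_swap[where A="\<lambda>t. norm (a t)" and B="\<lambda>v. std_normal_density v * L1_norm b"])
    show "(\<lambda>(t, v). a t * cphi v * ecx t (u - d * v) * fourier b (u - d * v)) \<in> borel_measurable (lborel \<Otimes>\<^sub>M lborel)"
      by measurable
    show "cmod (a t * cphi v * ecx t (u - d * v) * fourier b (u - d * v)) \<le> cmod (a t) * (std_normal_density v * L1_norm b)" for t v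
    proof -
      have "cmod (fourier b (u - d * v)) \<le> L1_norm b" by (rule fourier_bound[OF ib])
      then have "cmod (a t) * std_normal_density v * cmod (fourier b (u - d * v)) \<le> cmod (a t) * std_normal_density v * L1_norm b"
        by (intro mult_left_mono) auto
      then show ?thesis by (simp add: norm_mult mult.assoc)
    qed
    show "0 \<le> std_normal_density v * L1_norm b" for v
      unfolding L1_norm_def by simp
    show "integrable lborel (\<lambda>t. cmod (a t))" using ia by simp
  qed auto
  also have "\<dots> = (\<integral>v. cphi v * (fourier a (u - d * v) * fourier b (u - d * v)) \<partial>lborel)"
  proof (rule Bochner_Integration.integral_cong[OF refl])
    fix v
    have "(\<integral>t. a t * cphi v * ecx t (u - d * v) * fourier b (u - d * v) \<partial>lborel)
       = (\<integral>t. (cphi v * fourier b (u - d * v)) * (a t * ecx t (u - d * v)) \<partial>lborel)"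
      by (rule Bochner_Integration.integral_cong[OF refl]) (simp add: algebra_simps)
    also have "\<dots> = cphi v * (fourier a (u - d * v) * fourier b (u - d * v))"
      by (simp only: integral_mult_right_zero fourier_def) (simp add: algebra_simps)
    finally show "(\<integral>t. a t * cphi v * ecx t (u - d * v) * fourier b (u - d * v) \<partial>lborel) = cphi v * (fourier a (u - d * v) * fourier b (u - d * v))" .
  qed
  finally show ?thesis .
qed



lemma conv_C0:
  fixes E :: "real \<Rightarrow> complex"
  assumes ib: "integrable lborel b" and Ec: "continuous_on UNIV E" and Eb: "\<And>z. norm (E z) \<le> B"
    and Et: "(E \<longlongrightarrow> 0) at_top" and Ebot: "(E \<longlongrightarrow> 0) at_bot"
  shows "(\<lambda>t. \<integral>y. b y * E (y - t) \<partial>lborel) \<in> C0"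
proof -
  have bm[measurable]: "b \<in> borel_measurable lborel" using ib by auto
  have Em[measurable]: "E \<in> borel_measurable borel" using Ec by (simp add: borel_measurable_continuous_onI)
  have iw: "integrable lborel (\<lambda>y. B * norm (b y))" using ib by simp
  have bnd: "\<And>X n. AE y in lborel. norm (b y * E (y - X n)) \<le> B * norm (b y)"
    by (intro AE_I2) (simp add: norm_mult, metis Eb mult.commute mult_left_mono norm_ge_zero)
  have cont: "continuous_on UNIV (\<lambda>t. \<integral>y. b y * E (y - t) \<partial>lborel)"
  proof -
    have "continuous (at t) (\<lambda>t. \<integral>y. b y * E (y - t) \<partial>lborel)" for t
    proof (rule continuous_at_sequentiallyI)
      fix X assume X: "X \<longlonglongrightarrow> t"
      show "(\<lambda>n. \<integral>y. b y * E (y - X n) \<partial>lborel) \<longlonglongrightarrow> (\<integral>y. b y * E (y - t) \<partial>lborel)"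
      proof (rule integral_dominated_convergence[OF _ _ iw _ bnd])
        show "AE y in lborel. (\<lambda>n. b y * E (y - X n)) \<longlonglongrightarrow> b y * E (y - t)"
        proof (intro AE_I2 tendsto_mult tendsto_const)
          fix y
          have "(\<lambda>n. y - X n) \<longlonglongrightarrow> y - t" by (intro tendsto_intros X)
          moreover have "isCont E (y - t)" using Ec by (simp add: continuous_on_eq_continuous_at)
          ultimately show "(\<lambda>n. E (y - X n)) \<longlonglongrightarrow> E (y - t)"
            using isCont_tendsto_compose by blast
        qed
      qed (measurable, measurable)
    qed
    then show ?thesis by (simp add: continuous_on_eq_continuous_at)
  qed
  have top: "((\<lambda>t. \<integral>y. b y * E (y - t) \<partial>lborel) \<longlongrightarrow> 0) at_top"
  proof (rule tendsto_at_topI_sequentially)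
    fix X :: "nat \<Rightarrow> real" assume X: "filterlim X at_top sequentially"
    have "(\<lambda>n. \<integral>y. b y * E (y - X n) \<partial>lborel) \<longlonglongrightarrow> (\<integral>y. b y * 0 \<partial>lborel)"
    proof (rule integral_dominated_convergence[where w="\<lambda>y. B * norm (b y)"])
      show "integrable lborel (\<lambda>y. B * norm (b y))" by (rule iw)
      show "\<And>n. AE y in lborel. norm (b y * E (y - X n)) \<le> B * norm (b y)" by (rule bnd)
      show "AE y in lborel. (\<lambda>n. b y * E (y - X n)) \<longlonglongrightarrow> b y * 0"
      proof (intro AE_I2)
        fix y
        have "LIM n sequentially. (-y) + X n :> at_top" by (rule filterlim_tendsto_add_at_top[OF tendsto_const X])
        then have "filterlim (\<lambda>n. y - X n) at_bot sequentially"
          by (subst filterlim_uminus_at_bot) simp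
        then have "(\<lambda>n. E (y - X n)) \<longlonglongrightarrow> 0" using Ebot filterlim_compose by blast
        then show "(\<lambda>n. b y * E (y - X n)) \<longlonglongrightarrow> b y * 0"
          by (intro tendsto_mult tendsto_const)
      qed
    qed (measurable, measurable)
    then show "(\<lambda>n. \<integral>y. b y * E (y - X n) \<partial>lborel) \<longlonglongrightarrow> 0" by simp
  qed
  have bot: "((\<lambda>t. \<integral>y. b y * E (y - t) \<partial>lborel) \<longlongrightarrow> 0) at_bot"
  proof (rule tendsto_at_botI_sequentially)
    fix X :: "nat \<Rightarrow> real" assume X: "filterlim X at_bot sequentially"
    have "(\<lambda>n. \<integral>y. b y * E (y - X n) \<partial>lborel) \<longlonglongrightarrow> (\<integral>y. b y * 0 \<partial>lborel)"
    proof (rule integral_dominated_convergence[where w="\<lambda>y. B * norm (b y)"])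
      show "integrable lborel (\<lambda>y. B * norm (b y))" by (rule iw)
      show "\<And>n. AE y in lborel. norm (b y * E (y - X n)) \<le> B * norm (b y)" by (rule bnd)
      show "AE y in lborel. (\<lambda>n. b y * E (y - X n)) \<longlonglongrightarrow> b y * 0"
      proof (intro AE_I2)
        fix y
        have "LIM n sequentially. - X n :> at_top" using X by (simp add: filterlim_uminus_at_bot)
        from filterlim_tendsto_add_at_top[OF tendsto_const this, of y]
        have "filterlim (\<lambda>n. y - X n) at_top sequentially" by simp
        then have "(\<lambda>n. E (y - X n)) \<longlonglongrightarrow> 0" using Et filterlim_compose by blast
        then show "(\<lambda>n. b y * E (y - X n)) \<longlonglongrightarrow> b y * 0"
          by (intro tendsto_mult tendsto_const)
      qed
    qed (measurable, measurable)
    then show "(\<lambda>n. \<integral>y. b y * E (y - X n) \<partial>lborel) \<longlonglongrightarrow> 0" by simp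
  qed
  have "((\<lambda>t. \<integral>y. b y * E (y - t) \<partial>lborel) \<longlongrightarrow> 0) at_infinity"
    unfolding at_infinity_eq_at_top_bot using top bot by (rule filterlim_sup)
  then show ?thesis using cont unfolding C0_def by simp
qed



lemma norm_EE: "norm (EE u d z) = exp (- ((d * z)^2) / 2)"
  by (simp add: EE_def Ker_def norm_mult)

lemma EE_bound: "norm (EE u d z) \<le> 1"
  unfolding norm_EE by simp

lemma EE_cont: "continuous_on UNIV (EE u d)"
  unfolding EE_def Ker_def by (intro continuous_intros) auto

lemma EE_top: assumes "d > 0" shows "(EE u d \<longlongrightarrow> 0) at_top"
proof (rule tendsto_norm_zero_cancel)
  have "((\<lambda>z. exp (- ((d * z)^2) / 2)) \<longlongrightarrow> 0) at_top" using assms by real_asymp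
  then show "((\<lambda>z. norm (EE u d z)) \<longlongrightarrow> 0) at_top" unfolding norm_EE .
qed

lemma EE_bot: assumes "d > 0" shows "(EE u d \<longlongrightarrow> 0) at_bot"
proof (rule tendsto_norm_zero_cancel)
  have "((\<lambda>z. exp (- ((d * z)^2) / 2)) \<longlongrightarrow> 0) at_bot" using assms by real_asymp
  then show "((\<lambda>z. norm (EE u d z)) \<longlongrightarrow> 0) at_bot" unfolding norm_EE .
qed

definition repf :: "real \<Rightarrow> real \<Rightarrow> (real \<Rightarrow> complex) \<Rightarrow> (real \<Rightarrow> complex) \<Rightarrow> nat \<Rightarrow> real \<Rightarrow> complex" where
  "repf u d a b = (\<lambda>n. if n = 0 then (\<lambda>t. GG u d b (-t)) else if n = 1 then (\<lambda>t. - GG u d a (-t)) else (\<lambda>t. 0))"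
definition reph :: "(real \<Rightarrow> complex) \<Rightarrow> (real \<Rightarrow> complex) \<Rightarrow> nat \<Rightarrow> real \<Rightarrow> complex" where
  "reph a b = (\<lambda>n. if n = 0 then a else if n = 1 then b else (\<lambda>t. 0))"

lemma zero_H1: "(\<lambda>t. 0) \<in> H1"
  unfolding H1_def fourier_def by simp

lemma zero_C0: "(\<lambda>t. 0) \<in> C0"
  unfolding C0_def by simp

lemma H1_int: "h \<in> H1 \<Longrightarrow> integrable lborel h"
  unfolding H1_def by simp

lemma rep_in:
  assumes d: "d > 0" and a: "a \<in> H1" and b: "b \<in> H1"
  shows "(repf u d a b, reph a b) \<in> tensor_reps"
proof -
  have f0: "(\<lambda>t. GG u d b (-t)) \<in> C0"
  proof -
    have "(\<lambda>t. GG u d b (-t)) = (\<lambda>t. \<integral>y. b y * EE u d (y - t) \<partial>lborel)"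
      by (simp add: GG_def add.commute)
    also have "\<dots> \<in> C0"
      by (rule conv_C0[OF H1_int[OF b] EE_cont EE_bound EE_top[OF d] EE_bot[OF d]])
    finally show ?thesis .
  qed
  have f1: "(\<lambda>t. - GG u d a (-t)) \<in> C0"
  proof -
    have "(\<lambda>t. - GG u d a (-t)) = (\<lambda>t. \<integral>y. a y * (\<lambda>z. - EE u d z) (y - t) \<partial>lborel)"
      by (simp add: GG_def add.commute)
    also have "\<dots> \<in> C0"
    proof (rule conv_C0[OF H1_int[OF a]])
      show "continuous_on UNIV (\<lambda>z. - EE u d z)" by (intro continuous_intros EE_cont)
      show "norm (- EE u d z) \<le> 1" for z using EE_bound by simp
      show "((\<lambda>z. - EE u d z) \<longlongrightarrow> 0) at_top" using tendsto_minus[OF EE_top[OF d]] by simp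
      show "((\<lambda>z. - EE u d z) \<longlongrightarrow> 0) at_bot" using tendsto_minus[OF EE_bot[OF d]] by simp
    qed
    finally show ?thesis .
  qed
  have L0: "L1_norm (\<lambda>t. 0) = 0" unfolding L1_norm_def by simp
  show ?thesis
    unfolding tensor_reps_def
  proof (intro CollectI, unfold case_prod_conv, intro conjI allI)
    fix n
    show "repf u d a b n \<in> C0" using f0 f1 zero_C0 by (simp add: repf_def)
    show "reph a b n \<in> H1" using a b zero_H1 by (simp add: reph_def)
  next
    show "summable (\<lambda>n. sup_norm (repf u d a b n) * L1_norm (reph a b n))"
      by (rule summable_finite[of "{0,1}"]) (auto simp: reph_def L0)
  qed
qed

lemma pairing_rep:
  "pairing T (repf u d a b) (reph a b) = (\<integral>t. T a t * GG u d b t \<partial>lborel) - (\<integral>t. T b t * GG u d a t \<partial>lborel)"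
proof -
  have "pairing T (repf u d a b) (reph a b) = (\<Sum>n\<in>{0,1}. \<integral>t. T (reph a b n) t * repf u d a b n (- t) \<partial>lborel)"
    unfolding pairing_def by (rule suminf_finite) (auto simp: reph_def repf_def)
  also have "\<dots> = (\<integral>t. T a t * GG u d b t \<partial>lborel) + (\<integral>t. - (T b t * GG u d a t) \<partial>lborel)"
    by (simp add: reph_def repf_def)
  finally show ?thesis by simp
qed



definition Phi :: "((real \<Rightarrow> complex) \<Rightarrow> (real \<Rightarrow> complex)) \<Rightarrow> (real \<Rightarrow> complex) \<Rightarrow> (real \<Rightarrow> complex) \<Rightarrow> real \<Rightarrow> complex" where
  "Phi T a b w = fourier (T a) w * fourier b w - fourier (T b) w * fourier a w"

lemma L1_norm_nonneg[simp]: "0 \<le> L1_norm h"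
  unfolding L1_norm_def by simp

lemma BH1_H1: "T \<in> BH1 \<Longrightarrow> h \<in> H1 \<Longrightarrow> T h \<in> H1"
  unfolding BH1_def by auto

lemma Phi_cont:
  assumes "T \<in> BH1" "a \<in> H1" "b \<in> H1"
  shows "continuous_on UNIV (Phi T a b)"
proof -
  have i: "integrable lborel (T a)" "integrable lborel (T b)" "integrable lborel a" "integrable lborel b"
    using assms BH1_H1 H1_int by auto
  show ?thesis unfolding Phi_def
    by (intro continuous_intros fourier_cont i)
qed

lemma Phi_bound:
  assumes "T \<in> BH1" "a \<in> H1" "b \<in> H1"
  shows "\<exists>M. \<forall>w. norm (Phi T a b w) \<le> M"
proof -
  have i: "integrable lborel (T a)" "integrable lborel (T b)" "integrable lborel a" "integrable lborel b"
    using assms BH1_H1 H1_int by auto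
  have "norm (Phi T a b w) \<le> L1_norm (T a) * L1_norm b + L1_norm (T b) * L1_norm a" for w
  proof -
    have "norm (Phi T a b w) \<le> norm (fourier (T a) w) * norm (fourier b w) + norm (fourier (T b) w) * norm (fourier a w)"
      unfolding Phi_def by (metis norm_mult norm_triangle_ineq4)
    also have "\<dots> \<le> L1_norm (T a) * L1_norm b + L1_norm (T b) * L1_norm a"
      by (intro add_mono mult_mono fourier_bound i) auto
    finally show ?thesis .
  qed
  then show ?thesis by blast
qed

lemma integrable_phi:
  fixes c :: "real \<Rightarrow> complex"
  assumes c: "continuous_on UNIV c" and M: "\<And>x. norm (c x) \<le> M"
  shows "integrable lborel (\<lambda>v. cphi v * c (u - d * v))"
proof (rule Bochner_Integration.integrable_bound)
  have cm[measurable]: "c \<in> borel_measurable borel" using c by (simp add: borel_measurable_continuous_onI)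
  show "integrable lborel (\<lambda>v. M * std_normal_density v)" by simp
  show "(\<lambda>v. cphi v * c (u - d * v)) \<in> borel_measurable lborel" by measurable
  have "0 \<le> M" using M[of 0] norm_ge_zero order_trans by blast
  then show "AE v in lborel. norm (cphi v * c (u - d * v)) \<le> norm (M * std_normal_density v)"
    using M by (intro AE_I2) (simp add: norm_mult, metis M mult.commute mult_left_mono normal_density_nonneg)
qed

lemma pairing_formula:
  assumes T: "T \<in> BH1" and a: "a \<in> H1" and b: "b \<in> H1"
  shows "pairing T (repf u d a b) (reph a b) = (\<integral>v. cphi v * Phi T a b (u - d * v) \<partial>lborel)"
proof -
  have i: "integrable lborel (T a)" "integrable lborel (T b)" "integrable lborel a" "integrable lborel b"
    using T a b BH1_H1 H1_int by auto
  have c1: "continuous_on UNIV (\<lambda>w. fourier (T a) w * fourier b w)"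
    by (intro continuous_intros fourier_cont i)
  have c2: "continuous_on UNIV (\<lambda>w. fourier (T b) w * fourier a w)"
    by (intro continuous_intros fourier_cont i)
  have b1: "norm (fourier (T a) w * fourier b w) \<le> L1_norm (T a) * L1_norm b" for w
    unfolding norm_mult by (intro mult_mono fourier_bound i) auto
  have b2: "norm (fourier (T b) w * fourier a w) \<le> L1_norm (T b) * L1_norm a" for w
    unfolding norm_mult by (intro mult_mono fourier_bound i) auto
  have "pairing T (repf u d a b) (reph a b)
     = (\<integral>v. cphi v * (fourier (T a) (u - d * v) * fourier b (u - d * v)) \<partial>lborel)
     - (\<integral>v. cphi v * (fourier (T b) (u - d * v) * fourier a (u - d * v)) \<partial>lborel)"
    unfolding pairing_rep Q[OF i(1) i(4)] Q[OF i(2) i(3)] ..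
  also have "\<dots> = (\<integral>v. cphi v * (fourier (T a) (u - d * v) * fourier b (u - d * v))
                    - cphi v * (fourier (T b) (u - d * v) * fourier a (u - d * v)) \<partial>lborel)"
    by (rule Bochner_Integration.integral_diff[symmetric])
       (rule integrable_phi[OF c1 b1], rule integrable_phi[OF c2 b2])
  also have "\<dots> = (\<integral>v. cphi v * Phi T a b (u - d * v) \<partial>lborel)"
    by (simp add: Phi_def algebra_simps)
  finally show ?thesis .
qed

lemma MH1_zero:
  assumes S: "S \<in> MH1" and a: "a \<in> H1" and b: "b \<in> H1" and d: "d > 0"
  shows "pairing S (repf u d a b) (reph a b) = 0"
proof -
  have SB: "S \<in> BH1" using S unfolding MH1_def by auto
  obtain m where m: "\<forall>h\<in>H1. AE w in lborel. w > 0 \<longrightarrow> fourier (S h) w = m w * fourier h w"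
    using S unfolding MH1_def by auto
  have Sa: "S a \<in> H1" and Sb: "S b \<in> H1" using SB a b BH1_H1 by auto
  have AEz: "AE w in lborel. Phi S a b w = 0"
    using m[rule_format, OF a] m[rule_format, OF b]
  proof eventually_elim
    case (elim w)
    show ?case
    proof (cases "w > 0")
      case True
      then show ?thesis using elim by (simp add: Phi_def)
    next
      case False
      then have "fourier (S a) w = 0" "fourier (S b) w = 0" using Sa Sb unfolding H1_def by auto
      then show ?thesis by (simp add: Phi_def)
    qed
  qed
  have Pm[measurable]: "Phi S a b \<in> borel_measurable borel"
    using Phi_cont[OF SB a b] by (simp add: borel_measurable_continuous_onI)
  have "AE v in lborel. Phi S a b (u + (- d) * v) = 0"
    by (rule AE_borel_affine) (use d AEz in auto)
  then have "AE v in lborel. cphi v * Phi S a b (u - d * v) = 0"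
    by eventually_elim simp
  then show ?thesis unfolding pairing_formula[OF SB a b] by (rule integral_eq_zero_AE)
qed

lemma pointwise:
  assumes T: "T \<in> BH1" and a: "a \<in> H1" and b: "b \<in> H1"
    and Z: "\<And>d. d > 0 \<Longrightarrow> pairing T (repf u d a b) (reph a b) = 0"
  shows "Phi T a b u = 0"
proof -
  obtain M where M: "\<And>w. norm (Phi T a b w) \<le> M" using Phi_bound[OF T a b] by blast
  have Pc: "continuous_on UNIV (Phi T a b)" by (rule Phi_cont[OF T a b])
  have Pm[measurable]: "Phi T a b \<in> borel_measurable borel"
    using Pc by (simp add: borel_measurable_continuous_onI)
  define dn where "dn n = 1 / (real n + 1)" for n :: nat
  have dn0: "dn n > 0" for n unfolding dn_def by simp
  have dnl: "dn \<longlonglongrightarrow> 0" unfolding dn_def by real_asymp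
  have "(\<lambda>n. \<integral>v. cphi v * Phi T a b (u - dn n * v) \<partial>lborel) \<longlonglongrightarrow> (\<integral>v. cphi v * Phi T a b u \<partial>lborel)"
  proof (rule integral_dominated_convergence[where w="\<lambda>v. M * std_normal_density v"])
    show "integrable lborel (\<lambda>v. M * std_normal_density v)" by simp
    show "AE v in lborel. (\<lambda>n. cphi v * Phi T a b (u - dn n * v)) \<longlonglongrightarrow> cphi v * Phi T a b u"
    proof (intro AE_I2 tendsto_mult tendsto_const)
      fix v
      have "(\<lambda>n. u - dn n * v) \<longlonglongrightarrow> u - 0 * v" by (intro tendsto_intros dnl)
      moreover have "isCont (Phi T a b) u" using Pc by (simp add: continuous_on_eq_continuous_at)
      ultimately show "(\<lambda>n. Phi T a b (u - dn n * v)) \<longlonglongrightarrow> Phi T a b u"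
        using isCont_tendsto_compose by fastforce
    qed
    have "0 \<le> M" using M[of 0] norm_ge_zero order_trans by blast
    then show "\<And>n. AE v in lborel. norm (cphi v * Phi T a b (u - dn n * v)) \<le> M * std_normal_density v"
      using M by (intro AE_I2) (simp add: norm_mult, metis M mult.commute mult_left_mono normal_density_nonneg)
  qed (measurable, measurable)
  moreover have "(\<integral>v. cphi v * Phi T a b (u - dn n * v) \<partial>lborel) = 0" for n
    using Z[OF dn0[of n]] unfolding pairing_formula[OF T a b] .
  ultimately have "(\<lambda>n. 0) \<longlonglongrightarrow> (\<integral>v. cphi v * Phi T a b u \<partial>lborel)"
    by simp
  then have "(\<integral>v. cphi v * Phi T a b u \<partial>lborel) = 0"
    using LIMSEQ_unique tendsto_const by blast
  moreover have "(\<integral>v. cphi v * Phi T a b u \<partial>lborel) = Phi T a b u"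
    by simp
  ultimately show ?thesis by simp
qed



lemma pow_bound:
  fixes x c a b :: real
  assumes x: "0 \<le> x" and c: "0 \<le> c" and a: "0 < a" and H: "\<And>n. x^n * a \<le> c^n * b"
  shows "x \<le> c"
proof (rule ccontr)
  assume "\<not> x \<le> c"
  then have cx: "c < x" by simp
  show False
  proof (cases "c = 0")
    case True
    then have "x * a \<le> 0" using H[of 1] by simp
    moreover have "0 < x * a" using cx True a by simp
    ultimately show False by simp
  next
    case False
    then have c0: "0 < c" using c by simp
    then have "1 < x / c" using cx by simp
    then obtain n where n: "b / a < (x / c)^n" using real_arch_pow by blast
    have cn: "0 < c^n" using c0 by simp
    have "b < a * (x/c)^n" using n a by (simp add: field_simps)
    then have "b * c^n < a * (x/c)^n * c^n" using cn by simp
    also have "a * (x/c)^n * c^n = x^n * a" using c0 by (simp add: power_divide field_simps)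
    finally show False using H[of n] by (simp add: mult.commute)
  qed
qed

lemma to_MH1:
  assumes T: "T \<in> BH1" and P: "\<And>a b u. a \<in> H1 \<Longrightarrow> b \<in> H1 \<Longrightarrow> Phi T a b u = 0"
  shows "T \<in> MH1"
proof -
  define Ex where "Ex u \<longleftrightarrow> (\<exists>k\<in>H1. fourier k u \<noteq> 0)" for u
  define kk where "kk u = (SOME k. k \<in> H1 \<and> fourier k u \<noteq> 0)" for u
  define m where "m u = (if Ex u then fourier (T (kk u)) u / fourier (kk u) u else 0)" for u
  have kk: "kk u \<in> H1 \<and> fourier (kk u) u \<noteq> 0" if "Ex u" for u
    using that unfolding Ex_def kk_def by (metis (mono_tags, lifting) someI_ex)
  have rel: "fourier (T h) u * fourier k u = fourier (T k) u * fourier h u" if "h \<in> H1" "k \<in> H1" for h k u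
    using P[OF that, of u] by (simp add: Phi_def)
  have key: "fourier (T h) u = m u * fourier h u" if h: "h \<in> H1" for h u
  proof (cases "Ex u")
    case True
    note k = kk[OF True]
    have "fourier (T h) u * fourier (kk u) u = fourier (T (kk u)) u * fourier h u"
      using rel[OF h] k by blast
    then show ?thesis using k True unfolding m_def by (simp add: field_simps)
  next
    case False
    have "T h \<in> H1" using T h by (rule BH1_H1)
    then have "fourier (T h) u = 0" using False unfolding Ex_def by blast
    then show ?thesis using False unfolding m_def by simp
  qed
  have Uopen: "open {u. Ex u}"
  proof -
    have "{u. Ex u} = (\<Union>k\<in>H1. {u. fourier k u \<noteq> 0})" unfolding Ex_def by auto
    also have "open \<dots>"
      by (intro open_UN ballI open_Collect_neq fourier_cont H1_int continuous_on_const)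
    finally show ?thesis .
  qed
  have mcont: "continuous_on {u. Ex u} m"
  proof -
    have "isCont m u" if "Ex u" for u
    proof -
      note k = kk[OF that]
      define V where "V = {x. fourier (kk u) x \<noteq> 0}"
      have Vo: "open V" unfolding V_def
        by (intro open_Collect_neq fourier_cont H1_int k[THEN conjunct1] continuous_on_const)
      have uV: "u \<in> V" using k unfolding V_def by simp
      have ev: "eventually (\<lambda>x. m x = fourier (T (kk u)) x / fourier (kk u) x) (nhds u)"
        unfolding eventually_nhds
      proof (intro exI conjI ballI)
        show "open V" "u \<in> V" by fact+
        fix x assume "x \<in> V"
        then have "fourier (kk u) x \<noteq> 0" unfolding V_def by simp
        moreover have "fourier (T (kk u)) x = m x * fourier (kk u) x" using key k by blast
        ultimately show "m x = fourier (T (kk u)) x / fourier (kk u) x" by simp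
      qed
      have ik: "integrable lborel (kk u)" "integrable lborel (T (kk u))"
        using k T BH1_H1 H1_int by blast+
      have c1: "isCont (fourier (kk u)) u" "isCont (fourier (T (kk u))) u"
        using fourier_cont[OF ik(1)] fourier_cont[OF ik(2)] by (simp_all add: continuous_on_eq_continuous_at)
      have "isCont (\<lambda>x. fourier (T (kk u)) x / fourier (kk u) x) u"
        using c1 k by (intro continuous_divide) auto
      then show ?thesis using isCont_cong[OF ev] by simp
    qed
    then show ?thesis using Uopen by (simp add: continuous_on_eq_continuous_at)
  qed
  have mmeas: "m \<in> borel_measurable lborel"
  proof -
    have "(\<lambda>x. indicator {u. Ex u} x *\<^sub>R m x) \<in> borel_measurable borel"
      by (rule borel_measurable_continuous_on_indicator) (use Uopen mcont in auto)
    moreover have "(\<lambda>x. indicator {u. Ex u} x *\<^sub>R m x) = m"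
      by (rule ext) (simp add: indicator_def m_def)
    ultimately show ?thesis by simp
  qed
  obtain C where C: "\<forall>h\<in>H1. L1_norm (T h) \<le> C * L1_norm h"
    using T unfolding BH1_def by blast
  define C' where "C' = max C 0"
  have C'0: "0 \<le> C'" unfolding C'_def by simp
  have C': "L1_norm (T h) \<le> C' * L1_norm h" if "h \<in> H1" for h
  proof -
    have "C * L1_norm h \<le> C' * L1_norm h" unfolding C'_def by (intro mult_right_mono) auto
    then show ?thesis using C that by fastforce
  qed
  have pw: "(T^^n) h \<in> H1 \<and> L1_norm ((T^^n) h) \<le> C'^n * L1_norm h \<and> fourier ((T^^n) h) u = m u ^ n * fourier h u"
    if h: "h \<in> H1" for h n u
  proof (induction n)
    case 0
    then show ?case using h by simp
  next
    case (Suc n)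
    let ?g = "(T^^n) h"
    have g: "?g \<in> H1" using Suc by blast
    have "(T^^Suc n) h = T ?g" by simp
    moreover have "T ?g \<in> H1" using T g by (rule BH1_H1)
    moreover have "L1_norm (T ?g) \<le> C'^Suc n * L1_norm h"
    proof -
      have "L1_norm (T ?g) \<le> C' * L1_norm ?g" using C' g by blast
      also have "\<dots> \<le> C' * (C'^n * L1_norm h)" using Suc C'0 by (intro mult_left_mono) auto
      finally show ?thesis by simp
    qed
    moreover have "fourier (T ?g) u = m u ^ Suc n * fourier h u"
      using key[OF g, of u] Suc by simp
    ultimately show ?case by simp
  qed
  have mb: "norm (m u) \<le> C'" for u
  proof (cases "Ex u")
    case True
    note k = kk[OF True]
    show ?thesis
    proof (rule pow_bound[where a="norm (fourier (kk u) u)" and b="L1_norm (kk u)"])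
      show "0 \<le> norm (m u)" "0 \<le> C'" "0 < norm (fourier (kk u) u)" using C'0 k by auto
      fix n
      have gi: "integrable lborel ((T^^n) (kk u))" using pw[OF k[THEN conjunct1]] H1_int by blast
      have "norm (m u) ^ n * norm (fourier (kk u) u) = norm (fourier ((T^^n) (kk u)) u)"
        using pw[OF k[THEN conjunct1], of n u] by (simp add: norm_mult norm_power)
      also have "\<dots> \<le> L1_norm ((T^^n) (kk u))" by (rule fourier_bound[OF gi])
      also have "\<dots> \<le> C'^n * L1_norm (kk u)" using pw[OF k[THEN conjunct1], of n u] by blast
      finally show "norm (m u) ^ n * norm (fourier (kk u) u) \<le> C'^n * L1_norm (kk u)" .
    qed
  next
    case False
    then show ?thesis using C'0 unfolding m_def by simp
  qed
  show ?thesis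
    unfolding MH1_def
  proof (intro CollectI conjI T exI[of _ m] mmeas exI[of _ C'] ballI)
    show "AE u in lborel. 0 < u \<longrightarrow> cmod (m u) \<le> C'" using mb by simp
    fix h assume "h \<in> H1"
    then show "AE u in lborel. 0 < u \<longrightarrow> fourier (T h) u = m u * fourier h u"
      using key by simp
  qed
qed

theorem mainTheorem5:
  shows "closedin weak_star_BH1 MH1"
proof -
  define Gen where "Gen = insert BH1 {{T \<in> BH1. pairing T f h \<in> U} | f h U. (f, h) \<in> tensor_reps \<and> open U}"
  have ws: "weak_star_BH1 = topology_generated_by Gen" unfolding weak_star_BH1_def Gen_def ..
  have top: "topspace weak_star_BH1 = BH1" unfolding ws Gen_def by auto
  define Fam where "Fam = (\<lambda>(u,d,a,b). {T \<in> BH1. pairing T (repf u d a b) (reph a b) \<in> - {0}})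
                      ` {(u,d,a,b). d > 0 \<and> a \<in> H1 \<and> b \<in> H1}"
  have MB: "MH1 \<subseteq> BH1" unfolding MH1_def by auto
  have eq: "BH1 - MH1 = \<Union>Fam"
  proof
    show "BH1 - MH1 \<subseteq> \<Union>Fam"
    proof
      fix T assume T: "T \<in> BH1 - MH1"
      have "\<not> (\<forall>a b u. a \<in> H1 \<longrightarrow> b \<in> H1 \<longrightarrow> Phi T a b u = 0)"
        using T to_MH1 by blast
      then obtain a b u where ab: "a \<in> H1" "b \<in> H1" and nz: "Phi T a b u \<noteq> 0" by blast
      then obtain d where d: "d > 0" "pairing T (repf u d a b) (reph a b) \<noteq> 0"
        using pointwise[of T a b u] T by blast
      then show "T \<in> \<Union>Fam" unfolding Fam_def using ab T
        by (intro UnionI[of "{T \<in> BH1. pairing T (repf u d a b) (reph a b) \<in> - {0}}"]) auto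
    qed
    show "\<Union>Fam \<subseteq> BH1 - MH1"
      unfolding Fam_def using MH1_zero by auto
  qed
  have "openin weak_star_BH1 (\<Union>Fam)"
  proof (rule openin_Union)
    fix S assume "S \<in> Fam"
    then obtain u d a b where S: "S = {T \<in> BH1. pairing T (repf u d a b) (reph a b) \<in> - {0}}"
      and dab: "d > 0" "a \<in> H1" "b \<in> H1" unfolding Fam_def by auto
    have "S \<in> Gen" unfolding Gen_def S
      using rep_in[OF dab, of u] open_Compl[OF closed_singleton[of 0]] by blast
    then show "openin weak_star_BH1 S" unfolding ws by (rule topology_generated_by_Basis)
  qed
  then show ?thesis unfolding closedin_def top using MB eq by simp
qed

end
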